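(* Let $1<p<\infty$, $q=\max\bigl(p,\tfrac{p}{p-1}\bigr)$ and $\delta=\frac{1}{2q}$. For $n\ge 1$ let \[ \mathcal{Z}(2n)=\{e^{2\pi i j/(2n+1)}\}_{j=0}^{n}\cup\{e^{-2\pi i (j-2\delta)/(2n+1)}\}_{j=1}^{n}=\{z_{(2n)k}\}_{k=0}^{2n}, \] and let $F_{2n}(z)=\prod_{k=0}^{2n}\bigl(1-\tfrac{2n}{2n+1}\overline{z_{(2n)k}}\,z\bigr)$. Let $I=\{e^{it}:0<t<\pi\}$ (so $|I|=\pi$). Then \[ \Bigl(\frac{1}{|I|}\int_{I}|F_{2n}(e^{i\theta})|^{p}\,d\theta\Bigr)^{1/p}\Bigl(\frac{1}{|I|}\int_{I}|F_{2n}(e^{i\theta})|^{-p/(p-1)}\,d\theta\Bigr)^{(p-1)/p}\longrightarrow\infty \quad (n\to\infty); \] in particular the weights $|F_{2n}|^p$ do not satisfy a uniform Muckenhoupt $(A_p)$ condition. (Each point of $\mathcal{Z}(2n)$, suitably indexed, satisfies $|\arg(z\,\overline{e^{2\pi i\delta/(2n+1)}\omega_{(2n)k}})|\le\frac{2\pi\delta}{2n+1}$, i.e. $\mathcal{Z}(2n)$ is an angular perturbation of size $\delta$ of the rotated $(2n+1)$th roots of unity.)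
   Context: $\omega_{mk}=e^{2\pi i k/(m+1)}$ denote the $(m+1)$th roots of unity. A family of nonnegative functions $w_n$ on the unit circle satisfies a uniform $(A_p)$ condition if there is $K$ with $\bigl(\frac{1}{|I|}\int_I w_n\bigr)^{1/p}\bigl(\frac{1}{|I|}\int_I w_n^{-1/(p-1)}\bigr)^{(p-1)/p}\le K$ for all subarcs $I$ and all $n$ (here applied with $w_n=|F_{2n}|^p$). *)

theory Defs
  imports "HOL-Analysis.Analysis"
begin

definition pert_delta :: "real \<Rightarrow> real" where
  "pert_delta p = 1 / (2 * max p (p / (p - 1)))"

definition Zpt :: "real \<Rightarrow> nat \<Rightarrow> nat \<Rightarrow> complex" where
  "Zpt p n k = (if k \<le> n then cis (2 * pi * real k / (2 * real n + 1))
                else cis (- 2 * pi * (real (k - n) - 2 * pert_delta p) / (2 * real n + 1)))"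

definition Fpoly :: "real \<Rightarrow> nat \<Rightarrow> complex \<Rightarrow> complex" where
  "Fpoly p n z = (\<Prod>k\<in>{0..2*n}.
      1 - complex_of_real (2 * real n / (2 * real n + 1)) * cnj (Zpt p n k) * z)"

definition Ap_quot :: "real \<Rightarrow> nat \<Rightarrow> real" where
  "Ap_quot p n =
     ((1 / pi) * (LBINT t=0..pi. cmod (Fpoly p n (cis t)) powr p)) powr (1 / p) *
     ((1 / pi) * (LBINT t=0..pi. cmod (Fpoly p n (cis t)) powr (- p / (p - 1)))) powr ((p - 1) / p)"

end

theory Submission
  imports Defs "HOL-Computational_Algebra.Polynomial" "HOL-Real_Asymp.Real_Asymp"
begin

lemma prod_roots_unity:
  fixes w :: complex and N :: nat
  assumes N: "N > 0"
  shows "(\<Prod>k<N. 1 - w * cnj (cis (2*pi*real k/real N))) = 1 - w ^ N"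
proof (cases "w = 0")
  case True then show ?thesis using N by simp
next
  case False
  define z where "z = (\<lambda>k::nat. w * cnj (cis (2*pi*real k/real N)))"
  define P where "P = (\<Prod>k<N. [:- z k, 1:])"
  define Q where "Q = monom (1::complex) N - [:w ^ N:]"
  have inj: "inj_on (\<lambda>k. cis (2 * pi * real k / real N)) {..<N}"
    using Complex.bij_betw_roots_unity[OF N] by (auto simp: bij_betw_def)
  have injz: "inj_on z {..<N}"
    using inj False unfolding z_def inj_on_def by (metis complex_cnj_cnj mult_cancel_left)
  have zN: "z k ^ N = w ^ N" for k
  proof -
    have e: "real N * (2 * pi * real k / real N) = 2 * pi * real k" using N by (simp add: field_simps)
    have "cis (2 * pi * real k / real N) ^ N = cis (2 * pi * real k)"
      by (subst Complex.DeMoivre) (simp only: e)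
    also have "\<dots> = 1" using cos_int_2pin[of "int k"] sin_int_2pin[of "int k"] by (simp add: complex_eq_iff)
    finally show ?thesis unfolding z_def
      by (metis complex_cnj_one complex_cnj_power mult_1_right power_mult_distrib)
  qed
  have degP: "degree P = N" unfolding P_def
    by (subst degree_prod_eq_sum_degree) auto
  have lcP: "lead_coeff P = 1" unfolding P_def
    by (subst lead_coeff_prod) auto
  have degQ: "degree Q \<le> N" unfolding Q_def
    by (intro degree_diff_le) (auto simp: degree_monom_le)
  have "P = Q"
  proof (rule poly_eqI_degree_lead_coeff[where n = N and A = "z ` {..<N}"])
    show "poly.coeff P N = poly.coeff Q N" using lcP degP N by (cases N) (simp_all add: Q_def)
    show "N \<le> card (z ` {..<N})" using injz by (simp add: card_image)
    show "degree P \<le> N" using degP by simp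
    show "degree Q \<le> N" by fact
    fix x assume "x \<in> z ` {..<N}"
    then obtain k where k: "k < N" "x = z k" by auto
    have "poly P x = 0" unfolding P_def using k by (auto simp: poly_prod)
    moreover have "poly Q x = 0" using zN k by (simp add: Q_def poly_monom)
    ultimately show "poly P x = poly Q x" by simp
  qed
  hence "poly P 1 = poly Q 1" by simp
  thus ?thesis by (simp add: P_def Q_def poly_prod poly_monom z_def)
qed


definition gg :: "real \<Rightarrow> real \<Rightarrow> real" where
  "gg r x = ln (1 - 2*r*cos x + r^2) / 2"

lemma quad_pos: "0 \<le> r \<Longrightarrow> r < 1 \<Longrightarrow> (1 - r)^2 \<le> 1 - 2*r*cos (x::real) + (r::real)^2"
proof -
  assume "0 \<le> r" "r < 1"
  have "r * cos x \<le> r" using \<open>0 \<le> r\<close> cos_le_one[of x] mult_left_le by blast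
  thus ?thesis by (simp add: power2_eq_square algebra_simps)
qed

lemma cmod_sq: "(cmod (1 - complex_of_real r * cis x))^2 = 1 - 2*r*cos x + r^2"
proof -
  have "(cmod (1 - complex_of_real r * cis x))^2 = (1 - r * cos x)^2 + (r * sin x)^2"
    by (simp add: cmod_power2 cis.ctr)
  also have "\<dots> = 1 - 2*r*cos x + r^2 * (sin x ^2 + cos x ^2)"
    by algebra
  finally show ?thesis by simp
qed

lemma gg_cmod:
  assumes "0 \<le> r" "r < 1"
  shows "ln (cmod (1 - complex_of_real r * cis x)) = gg r x"
proof -
  have pos: "0 < 1 - 2*r*cos x + r^2"
    using quad_pos[OF assms, of x] assms by (smt (verit) zero_less_power)
  have "cmod (1 - complex_of_real r * cis x) = sqrt (1 - 2*r*cos x + r^2)"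
    by (metis cmod_sq norm_ge_zero real_sqrt_abs real_sqrt_unique)
  thus ?thesis unfolding gg_def using pos by (simp add: ln_sqrt)
qed

lemma cmod_factor_pos:
  assumes "0 \<le> r" "r < 1"
  shows "cmod (1 - complex_of_real r * cis x) > 0"
proof -
  have "cmod (complex_of_real r * cis x) < 1" using assms by (simp add: norm_mult)
  hence "1 - complex_of_real r * cis x \<noteq> 0" by auto
  thus ?thesis by simp
qed

lemma gg_periodic: "gg r (x - 2*pi) = gg r x" "gg r (x + 2*pi) = gg r x" "gg r (- x) = gg r x"
  by (simp_all add: gg_def cos_diff cos_add)

lemma sum_gg_roots:
  assumes r: "0 \<le> r" "r < 1" and N: "N > 0"
  shows "(\<Sum>k<N. gg r (x - real k * (2*pi/real N))) = ln (cmod (1 - complex_of_real (r^N) * cis (real N * x)))"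
proof -
  have "(\<Prod>k<N. 1 - (complex_of_real r * cis x) * cnj (cis (2*pi*real k/real N))) = 1 - (complex_of_real r * cis x)^N"
    by (rule prod_roots_unity[OF N])
  also have "(complex_of_real r * cis x)^N = complex_of_real (r^N) * cis (real N * x)"
    by (simp add: power_mult_distrib Complex.DeMoivre)
  finally have eq0: "(\<Prod>k<N. 1 - complex_of_real r * cis x * cnj (cis (2*pi*real k/real N))) = 1 - complex_of_real (r^N) * cis (real N * x)" .
  have tm: "complex_of_real r * cis x * cnj (cis (2*pi*real k/real N)) = complex_of_real r * cis (x - real k * (2*pi/real N))" for k
  proof -
    have "cis x * cnj (cis (2*pi*real k/real N)) = cis (x - real k * (2*pi/real N))"
      by (simp only: cis_cnj cis_mult) (simp add: algebra_simps)
    thus ?thesis by (simp only: mult.assoc)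
  qed
  have eq: "(\<Prod>k<N. 1 - complex_of_real r * cis (x - real k * (2*pi/real N))) = 1 - complex_of_real (r^N) * cis (real N * x)"
    using eq0 by (simp only: tm)
  have "ln (cmod (1 - complex_of_real (r^N) * cis (real N * x))) = ln (\<Prod>k<N. cmod (1 - complex_of_real r * cis (x - real k * (2*pi/real N))))"
    by (subst eq[symmetric]) (simp only: prod_norm)
  also have "\<dots> = (\<Sum>k<N. ln (cmod (1 - complex_of_real r * cis (x - real k * (2*pi/real N)))))"
    by (rule ln_prod) (use cmod_factor_pos[OF r] in auto)
  also have "\<dots> = (\<Sum>k<N. gg r (x - real k * (2*pi/real N)))"
    by (simp add: gg_cmod[OF r])
  finally show ?thesis by simp
qed


definition NN :: "nat \<Rightarrow> real" where "NN n = 2 * real n + 1"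
definition hh :: "nat \<Rightarrow> real" where "hh n = 2 * pi / NN n"
definition rr :: "nat \<Rightarrow> real" where "rr n = 2 * real n / NN n"
definition ee :: "real \<Rightarrow> nat \<Rightarrow> real" where "ee p n = 2 * pert_delta p * hh n"

lemma NN_pos: "NN n > 0" by (simp add: NN_def)
lemma rr_bounds: "0 \<le> rr n" "rr n < 1"
  by (auto simp: rr_def NN_def field_simps)

lemma Fpoly_split:
  "Fpoly p n (cis t) =
     (\<Prod>k\<in>{0..n}. 1 - complex_of_real (rr n) * cis (t - real k * hh n)) *
     (\<Prod>j\<in>{1..n}. 1 - complex_of_real (rr n) * cis (t + real j * hh n - ee p n))"
proof -
  have U: "{0..2*n} = {0..n} \<union> {n+1..2*n}" by auto
  have "Fpoly p n (cis t) = (\<Prod>k\<in>{0..n}. 1 - complex_of_real (rr n) * cnj (Zpt p n k) * cis t) *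
        (\<Prod>k\<in>{n+1..2*n}. 1 - complex_of_real (rr n) * cnj (Zpt p n k) * cis t)"
    unfolding Fpoly_def U rr_def NN_def by (subst prod.union_disjoint) auto
  also have "(\<Prod>k\<in>{0..n}. 1 - complex_of_real (rr n) * cnj (Zpt p n k) * cis t) =
      (\<Prod>k\<in>{0..n}. 1 - complex_of_real (rr n) * cis (t - real k * hh n))"
  proof (rule prod.cong[OF refl])
    fix k assume "k \<in> {0..n}"
    hence "Zpt p n k = cis (2 * pi * real k / (2 * real n + 1))" by (simp add: Zpt_def)
    hence "cnj (Zpt p n k) * cis t = cis (t - real k * hh n)"
      by (simp add: cis_cnj cis_mult hh_def NN_def mult.commute)
    thus "1 - complex_of_real (rr n) * cnj (Zpt p n k) * cis t = 1 - complex_of_real (rr n) * cis (t - real k * hh n)"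
      by (simp add: mult.assoc)
  qed
  also have "(\<Prod>k\<in>{n+1..2*n}. 1 - complex_of_real (rr n) * cnj (Zpt p n k) * cis t) =
      (\<Prod>j\<in>{1..n}. 1 - complex_of_real (rr n) * cnj (Zpt p n (j + n)) * cis t)"
    using prod.shift_bounds_cl_nat_ivl[of "\<lambda>k. 1 - complex_of_real (rr n) * cnj (Zpt p n k) * cis t" 1 n n]
    by (simp add: mult_2)
  also have "\<dots> = (\<Prod>j\<in>{1..n}. 1 - complex_of_real (rr n) * cis (t + real j * hh n - ee p n))"
  proof (rule prod.cong[OF refl])
    fix j assume j: "j \<in> {1..n}"
    hence "Zpt p n (j + n) = cis (- 2 * pi * (real j - 2 * pert_delta p) / (2 * real n + 1))"
      by (simp add: Zpt_def)
    moreover have "t - - 2 * pi * (real j - 2 * pert_delta p) / (2 * real n + 1) = t + real j * hh n - ee p n"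
    proof -
      have gen: "t - - 2 * pi * (a - 2 * d) / M = t + a * (2 * pi / M) - 2 * d * (2 * pi / M)" if "M \<noteq> 0" for M a d :: real
        using that by (simp add: field_simps)
      show ?thesis unfolding hh_def ee_def NN_def by (rule gen) simp
    qed
    ultimately have "cnj (Zpt p n (j + n)) * cis t = cis (t + real j * hh n - ee p n)"
      by (simp only: cis_cnj cis_mult) (simp add: algebra_simps)
    thus "1 - complex_of_real (rr n) * cnj (Zpt p n (j + n)) * cis t = 1 - complex_of_real (rr n) * cis (t + real j * hh n - ee p n)"
      by (simp add: mult.assoc)
  qed
  finally show ?thesis .
qed

lemma ln_cmod_prod:
  assumes "finite A"
  shows "ln (cmod (\<Prod>k\<in>A. 1 - complex_of_real (rr n) * cis (f k))) = (\<Sum>k\<in>A. gg (rr n) (f k))"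
proof -
  have "ln (cmod (\<Prod>k\<in>A. 1 - complex_of_real (rr n) * cis (f k))) = ln (\<Prod>k\<in>A. cmod (1 - complex_of_real (rr n) * cis (f k)))"
    by (simp only: prod_norm)
  also have "\<dots> = (\<Sum>k\<in>A. ln (cmod (1 - complex_of_real (rr n) * cis (f k))))"
    by (rule ln_prod[OF assms]) (use cmod_factor_pos[OF rr_bounds] in auto)
  also have "\<dots> = (\<Sum>k\<in>A. gg (rr n) (f k))"
    by (simp add: gg_cmod[OF rr_bounds])
  finally show ?thesis .
qed

lemma sum_upper_rev:
  "(\<Sum>j\<in>{1..n}. gg (rr n) (x + real j * hh n)) = (\<Sum>k\<in>{n+1..2*n}. gg (rr n) (x - real k * hh n))"
proof -
  have "(\<Sum>k\<in>{n+1..2*n}. gg (rr n) (x - real k * hh n)) = (\<Sum>j\<in>{1..n}. gg (rr n) (x - real (j + n) * hh n))"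
    using sum.shift_bounds_cl_nat_ivl[of "\<lambda>k. gg (rr n) (x - real k * hh n)" 1 n n] by (simp add: mult_2)
  also have "\<dots> = (\<Sum>j\<in>{1..n}. gg (rr n) (x - real (n + 1 - j + n) * hh n))"
    using sum.atLeastAtMost_rev[of "\<lambda>j. gg (rr n) (x - real (j + n) * hh n)" 1 n] by (simp add: add.commute)
  also have "\<dots> = (\<Sum>j\<in>{1..n}. gg (rr n) (x + real j * hh n))"
  proof (rule sum.cong[OF refl])
    fix j assume j: "j \<in> {1..n}"
    have a: "real (n + 1 - j + n) = NN n - real j" using j by (simp add: NN_def of_nat_diff)
    have b: "NN n * hh n = 2 * pi" using NN_pos[of n] by (simp add: hh_def)
    have "x - real (n + 1 - j + n) * hh n = (x + real j * hh n) - 2 * pi"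
      by (simp only: a left_diff_distrib b)
    thus "gg (rr n) (x - real (n + 1 - j + n) * hh n) = gg (rr n) (x + real j * hh n)"
      by (subst \<open>x - real (n + 1 - j + n) * hh n = (x + real j * hh n) - 2 * pi\<close>) (rule gg_periodic(1))
  qed
  finally show ?thesis by simp
qed

lemma lnF:
  "ln (cmod (Fpoly p n (cis t))) =
     ln (cmod (1 - complex_of_real (rr n ^ (2*n+1)) * cis (NN n * (t - ee p n)))) +
     (\<Sum>k\<in>{0..n}. gg (rr n) (t - real k * hh n) - gg (rr n) (t - ee p n - real k * hh n))"
proof -
  define x where "x = t - ee p n"
  have nz1: "(\<Prod>k\<in>{0..n}. 1 - complex_of_real (rr n) * cis (t - real k * hh n)) \<noteq> 0"
    using cmod_factor_pos[OF rr_bounds] by (auto simp: prod_zero_iff)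
  have nz2: "(\<Prod>j\<in>{1..n}. 1 - complex_of_real (rr n) * cis (t + real j * hh n - ee p n)) \<noteq> 0"
    using cmod_factor_pos[OF rr_bounds] by (auto simp: prod_zero_iff)
  have "ln (cmod (Fpoly p n (cis t))) = (\<Sum>k\<in>{0..n}. gg (rr n) (t - real k * hh n)) + (\<Sum>j\<in>{1..n}. gg (rr n) (t + real j * hh n - ee p n))"
    unfolding Fpoly_split using nz1 nz2
    by (simp add: norm_mult ln_mult ln_cmod_prod[where f="\<lambda>k. t - real k * hh n"] ln_cmod_prod[where f="\<lambda>j. t + real j * hh n - ee p n"])
  also have "(\<Sum>j\<in>{1..n}. gg (rr n) (t + real j * hh n - ee p n)) = (\<Sum>j\<in>{1..n}. gg (rr n) (x + real j * hh n))"
    by (simp add: x_def algebra_simps)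
  also have "\<dots> = (\<Sum>k\<in>{n+1..2*n}. gg (rr n) (x - real k * hh n))" by (rule sum_upper_rev)
  also have "\<dots> = (\<Sum>k<2*n+1. gg (rr n) (x - real k * hh n)) - (\<Sum>k\<in>{0..n}. gg (rr n) (x - real k * hh n))"
  proof -
    have U: "{..<2*n+1} = {0..n} \<union> {n+1..2*n}" by auto
    show ?thesis unfolding U by (subst sum.union_disjoint) auto
  qed
  also have "(\<Sum>k<2*n+1. gg (rr n) (x - real k * hh n)) = ln (cmod (1 - complex_of_real (rr n ^ (2*n+1)) * cis (NN n * x)))"
  proof -
    have e: "real (2*n+1) = NN n" by (simp add: NN_def)
    show ?thesis using sum_gg_roots[OF rr_bounds, where N="2*n+1" and x=x] unfolding e hh_def by simp
  qed
  finally show ?thesis by (simp add: x_def sum_subtractf algebra_simps)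
qed


lemma one_minus_rr: "1 - rr n = 1 / NN n"
  using NN_pos[of n] by (simp add: rr_def NN_def field_simps)

lemma gg_lower: "gg (rr n) x \<ge> - ln (NN n)"
proof -
  have N: "NN n > 0" by (rule NN_pos)
  have "(1 / NN n)^2 \<le> 1 - 2 * rr n * cos x + (rr n)^2"
    using quad_pos[OF rr_bounds, of n x] by (simp add: one_minus_rr)
  moreover have p1: "0 < (1 / NN n)^2" using N by simp
  ultimately have "ln ((1 / NN n)^2) \<le> ln (1 - 2 * rr n * cos x + (rr n)^2)"
    by (metis ln_le_cancel_iff order_less_le_trans)
  moreover have "ln ((1 / NN n)^2) = - 2 * ln (NN n)"
    using N by (simp add: ln_div ln_realpow)
  ultimately show ?thesis unfolding gg_def by simp
qed

lemma one_minus_cos_le: "1 - cos x \<le> (x::real)^2 / 2"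
proof -
  have "cos x = cos (2 * (x/2))" by simp
  also have "\<dots> = 1 - 2 * sin (x/2) ^ 2" by (rule cos_double_sin)
  finally have "1 - cos x = 2 * sin (x/2)^2" by simp
  also have "sin (x/2)^2 \<le> (x/2)^2"
    using abs_sin_x_le_abs_x[of "x/2"] by (metis abs_le_square_iff)
  finally show ?thesis by (simp add: power2_eq_square)
qed

lemma gg_upper: "gg (rr n) x \<le> ln (1 / NN n + \<bar>x\<bar>)"
proof -
  have N: "NN n > 0" by (rule NN_pos)
  define r where "r = rr n"
  have r: "0 \<le> r" "r < 1" using rr_bounds r_def by auto
  have u: "1 - 2 * r * cos x + r^2 = (1 - r)^2 + 2 * r * (1 - cos x)" by (simp add: power2_eq_square algebra_simps)
  have "2 * r * (1 - cos x) \<le> 2 * 1 * (x^2/2)"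
    using r one_minus_cos_le[of x] cos_le_one[of x] by (intro mult_mono) auto
  hence "1 - 2 * r * cos x + r^2 \<le> (1 / NN n)^2 + x^2"
    using u by (simp add: r_def one_minus_rr)
  also have "\<dots> \<le> (1 / NN n + \<bar>x\<bar>)^2"
    using N by (simp add: power2_eq_square algebra_simps)
  finally have le: "1 - 2 * r * cos x + r^2 \<le> (1 / NN n + \<bar>x\<bar>)^2" .
  have pos: "0 < 1 - 2 * r * cos x + r^2"
    using quad_pos[OF r, of x] r by (smt (verit) zero_less_power)
  have "ln (1 - 2 * r * cos x + r^2) \<le> ln ((1 / NN n + \<bar>x\<bar>)^2)"
    using le pos by (subst ln_le_cancel_iff) auto
  also have "\<dots> = 2 * ln (1 / NN n + \<bar>x\<bar>)"
    using N by (subst ln_realpow) auto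
  finally show ?thesis unfolding gg_def r_def by simp
qed

lemma gg_nonneg: "cos x \<le> 0 \<Longrightarrow> gg (rr n) x \<ge> 0"
proof -
  assume c: "cos x \<le> 0"
  have a: "rr n * cos x \<le> 0" using rr_bounds(1)[of n] c by (simp add: mult_nonneg_nonpos)
  have e: "2 * rr n * cos x = 2 * (rr n * cos x)" by simp
  have "1 \<le> 1 - 2 * rr n * cos x + (rr n)^2" using a zero_le_power2[of "rr n"] unfolding e by linarith
  thus ?thesis unfolding gg_def by simp
qed

lemma sin_ge_half: assumes "0 \<le> (y::real)" "y \<le> 1" shows "sin y \<ge> y / 2"
proof (cases "y = 0")
  case True thus ?thesis by simp
next
  case False
  hence "0 < y" using assms by simp
  from MVT2[OF this, of sin cos] obtain z where z: "0 < z" "z < y" "sin y - sin 0 = (y - 0) * cos z"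
    by (auto intro: DERIV_sin)
  have "pi / 3 > 1" using pi_gt3 by simp
  hence "cos z \<ge> cos (pi/3)" using z assms by (intro cos_monotone_0_pi_le) auto
  hence "cos z \<ge> 1/2" by (simp add: cos_60)
  thus ?thesis using z \<open>0 < y\<close> by (simp add: mult_left_mono[of "1/2" "cos z" y, simplified] )
qed


lemma uu_pos: "0 \<le> r \<Longrightarrow> r < 1 \<Longrightarrow> 0 < 1 - 2*r*cos (x::real) + r^2"
  using quad_pos[of r x] by (smt (verit) zero_less_power)

lemma gg_deriv1:
  assumes "0 \<le> r" "r < 1"
  shows "(gg r has_real_derivative (r * sin x / (1 - 2*r*cos x + r^2))) (at x)"
proof -
  define u where "u = 1 - 2*r*cos x + r^2"
  have pos: "0 < u" unfolding u_def by (rule uu_pos[OF assms])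
  have du: "((\<lambda>x. 1 - 2*r*cos x + r^2) has_real_derivative (2 * r * sin x)) (at x)"
    by (auto intro!: derivative_eq_intros)
  have pos': "0 < (\<lambda>x. 1 - 2*r*cos x + r^2) x" using pos unfolding u_def by simp
  have "((\<lambda>x. ln (1 - 2*r*cos x + r^2)) has_real_derivative 1 / u * (2 * r * sin x)) (at x)"
    using DERIV_chain2[OF DERIV_ln_divide[OF pos'] du] unfolding u_def by simp
  hence "((\<lambda>x. ln (1 - 2*r*cos x + r^2) / 2) has_real_derivative (1 / u * (2 * r * sin x)) / 2) (at x)"
    by (rule DERIV_cdivide)
  moreover have eq: "(1 / u * (2 * r * sin x)) / 2 = r * sin x / u" by simp
  ultimately have "((\<lambda>x. ln (1 - 2*r*cos x + r^2) / 2) has_real_derivative r * sin x / u) (at x)"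
    by (rule DERIV_cong)
  thus ?thesis unfolding gg_def[abs_def] u_def .
qed

lemma gg_deriv2:
  assumes "0 \<le> r" "r < 1"
  shows "((\<lambda>x. r * sin x / (1 - 2*r*cos x + r^2)) has_real_derivative
           (r * ((1 + r^2) * cos x - 2*r) / (1 - 2*r*cos x + r^2)^2)) (at x)"
proof -
  define u where "u = 1 - 2*r*cos x + r^2"
  have pos: "0 < u" unfolding u_def by (rule uu_pos[OF assms])
  have du: "((\<lambda>x. 1 - 2*r*cos x + r^2) has_real_derivative (2 * r * sin x)) (at x)"
    by (auto intro!: derivative_eq_intros)
  have dn: "((\<lambda>x. r * sin x) has_real_derivative (r * cos x)) (at x)"
    by (auto intro!: derivative_eq_intros)
  have "((\<lambda>x. r * sin x / (1 - 2*r*cos x + r^2)) has_real_derivative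
           ((r * cos x) * u - (r * sin x) * (2 * r * sin x)) / (u * u)) (at x)"
    using DERIV_divide[OF dn du] pos unfolding u_def by (simp add: power2_eq_square)
  moreover have "(r * cos x) * u - (r * sin x) * (2 * r * sin x) = r * ((1 + r^2) * cos x - 2*r)"
  proof -
    have sc: "sin x * sin x = 1 - cos x * cos x" using sin_squared_eq[of x] by (simp add: power2_eq_square)
    have "(r * cos x) * u - (r * sin x) * (2 * r * sin x) = (r * cos x) * u - 2*r*r*(sin x * sin x)"
      by (simp add: algebra_simps)
    also have "\<dots> = r * ((1 + r^2) * cos x - 2*r)" unfolding sc u_def by (simp add: power2_eq_square algebra_simps)
    finally show ?thesis .
  qed
  ultimately have "((\<lambda>x. r * sin x / (1 - 2*r*cos x + r^2)) has_real_derivative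
           (r * ((1 + r^2) * cos x - 2*r)) / (u * u)) (at x)" by simp
  thus ?thesis unfolding u_def power2_eq_square .
qed

lemma cos_beta_bound:
  assumes n: "n \<ge> 1"
  shows "cos (3 / NN n) \<le> 1 - (1 / NN n)^2"
proof -
  define N where "N = NN n"
  have N3: "N \<ge> 3" using n by (simp add: N_def NN_def)
  have b1: "3 / N / 2 \<le> 1" using N3 by (simp add: field_simps)
  have b0: "0 \<le> 3 / N / 2" using N3 by simp
  have "cos (3 / N) = cos (2 * (3 / N / 2))" by simp
  also have "\<dots> = 1 - 2 * sin (3 / N / 2) ^ 2" by (rule cos_double_sin)
  finally have c: "cos (3 / N) = 1 - 2 * sin (3 / N / 2) ^ 2" .
  have "3 / N / 2 / 2 \<le> sin (3 / N / 2)" by (rule sin_ge_half[OF b0 b1])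
  hence "(3 / N / 2 / 2)^2 \<le> sin (3 / N / 2) ^ 2"
    using N3 by (intro power_mono) auto
  hence "cos (3 / N) \<le> 1 - 2 * (3 / N / 2 / 2)^2" using c by simp
  also have "\<dots> \<le> 1 - (1 / N)^2" using N3 by (simp add: power2_eq_square field_simps)
  finally show ?thesis unfolding N_def .
qed

lemma cos_le_beta:
  assumes "0 \<le> b" "b \<le> pi" "x \<in> {b..2*pi - b}"
  shows "cos x \<le> cos b"
proof (cases "x \<le> pi")
  case True thus ?thesis using assms by (intro cos_monotone_0_pi_le) auto
next
  case False
  have "cos x = cos (2*pi - x)" by (simp add: cos_diff)
  also have "\<dots> \<le> cos b" using assms False by (intro cos_monotone_0_pi_le) auto
  finally show ?thesis .
qed

lemma gg_concave:
  assumes n: "n \<ge> 1"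
  shows "concave_on {3 / NN n .. 2*pi - 3 / NN n} (gg (rr n))"
proof (rule f''_le0_imp_concave)
  define r where "r = rr n"
  have r: "0 \<le> r" "r < 1" using rr_bounds r_def by auto
  show "convex {3 / NN n .. 2*pi - 3 / NN n}" by (rule convex_real_interval)
  fix x assume x: "x \<in> {3 / NN n .. 2*pi - 3 / NN n}"
  show "(gg (rr n) has_real_derivative (rr n * sin x / (1 - 2 * rr n * cos x + (rr n)^2))) (at x)"
    by (rule gg_deriv1[OF rr_bounds])
  show "((\<lambda>x. rr n * sin x / (1 - 2 * rr n * cos x + (rr n)^2)) has_real_derivative
           (rr n * ((1 + (rr n)^2) * cos x - 2 * rr n) / (1 - 2 * rr n * cos x + (rr n)^2)^2)) (at x)"
    by (rule gg_deriv2[OF rr_bounds])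
  have N3: "NN n \<ge> 3" using n by (simp add: NN_def)
  have "3 / NN n \<le> 1" using N3 by simp
  hence bpi: "3 / NN n \<le> pi" using pi_gt3 by linarith
  have c1: "cos x \<le> 1 - (1 / NN n)^2"
    using cos_le_beta[OF _ bpi x] cos_beta_bound[OF n] N3 by simp
  have key: "(1 + r^2) * cos x \<le> 2 * r"
  proof (cases "cos x \<le> 0")
    case True
    have "(1 + r^2) * cos x \<le> 0" using True by (simp add: mult_nonneg_nonpos)
    thus ?thesis using r by simp
  next
    case False
    have d: "1 / NN n = 1 - r" by (simp add: r_def one_minus_rr)
    have "(1 + r^2) * cos x \<le> (1 + r^2) * (1 - (1 - r)^2)"
      using c1 d by (intro mult_left_mono) auto
    also have "\<dots> \<le> 2 * r" using zero_le_power2[of "r*(r-1)"] by (simp add: power2_eq_square algebra_simps)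
    finally show ?thesis .
  qed
  have "r * ((1 + r^2) * cos x - 2 * r) \<le> 0" using key r by (simp add: mult_nonneg_nonpos)
  thus "rr n * ((1 + (rr n)^2) * cos x - 2 * rr n) / (1 - 2 * rr n * cos x + (rr n)^2)^2 \<le> 0"
    unfolding r_def by (simp add: divide_nonpos_nonneg)
qed


definition ss :: "real \<Rightarrow> real" where "ss p = 2 * pert_delta p"
definition bb :: "nat \<Rightarrow> real" where "bb n = 3 / NN n"
definition KK :: real where "KK = ln (1 + 6 * pi)"

lemma concave_chord:
  fixes f :: "real \<Rightarrow> real"
  assumes f: "concave_on C f" and C: "x \<in> C" "z \<in> C" and xyz: "x < y" "y < z"
  shows "(y - x) * (f z - f y) \<le> (z - y) * (f y - f x)"
proof -
  have cv: "convex_on C (\<lambda>x. - f x)" using f by (simp add: concave_on_def)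
  have a: "((- f x) - (- f y)) / (x - y) \<le> ((- f x) - (- f z)) / (x - z)"
    by (rule convex_on_slope_le(1)[OF cv C xyz])
  have b: "((- f x) - (- f z)) / (x - z) \<le> ((- f y) - (- f z)) / (y - z)"
    by (rule convex_on_slope_le(2)[OF cv C xyz])
  have e1: "((- f x) - (- f y)) / (x - y) = - ((f y - f x) / (y - x))"
    by (metis minus_diff_eq divide_minus_right diff_minus_eq_add add.commute diff_conv_add_uminus)
  have e2: "((- f y) - (- f z)) / (y - z) = - ((f z - f y) / (z - y))"
    by (metis minus_diff_eq divide_minus_right diff_minus_eq_add add.commute diff_conv_add_uminus)
  have S: "(f z - f y) / (z - y) \<le> (f y - f x) / (y - x)"
    using order_trans[OF a b] unfolding e1 e2 by linarith
  have pos: "0 \<le> (y - x) * (z - y)" using xyz by simp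
  have "(y - x) * (z - y) * ((f z - f y) / (z - y)) \<le> (y - x) * (z - y) * ((f y - f x) / (y - x))"
    using S pos by (intro mult_left_mono) auto
  moreover have "(y - x) * (z - y) * ((f z - f y) / (z - y)) = (y - x) * (f z - f y)" using xyz by simp
  moreover have "(y - x) * (z - y) * ((f y - f x) / (y - x)) = (z - y) * (f y - f x)" using xyz by simp
  ultimately show ?thesis by simp
qed

lemma ss_bounds: assumes "p > 1" shows "0 < ss p" "ss p \<le> 1/2"
proof -
  have m: "max p (p / (p - 1)) \<ge> 2"
  proof (cases "p \<ge> 2")
    case True thus ?thesis by simp
  next
    case False
    hence "p / (p - 1) \<ge> 2" using assms by (simp add: field_simps)
    thus ?thesis by simp
  qed
  show "0 < ss p" using m by (simp add: ss_def pert_delta_def)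
  show "ss p \<le> 1/2" using m by (simp add: ss_def pert_delta_def field_simps)
qed

context
  fixes p :: real and n :: nat
  assumes p: "p > 1" and n: "n \<ge> 2"
begin

lemma N5: "NN n \<ge> 5" using n by (simp add: NN_def)
lemma hpos: "hh n > 0" using NN_pos[of n] by (simp add: hh_def)
lemma ee_eq: "ee p n = ss p * hh n" by (simp add: ee_def ss_def)
lemma ee_pos: "ee p n > 0" using ss_bounds[OF p] hpos by (simp add: ee_eq)
lemma ee_le: "ee p n \<le> hh n / 2" using ss_bounds[OF p] hpos ee_eq by (simp add: mult_right_le_one_le)
lemma NNhh: "NN n * hh n = 2 * pi" using NN_pos[of n] by (simp add: hh_def)
lemma nhh: "real n * hh n = pi - hh n / 2"
proof -
  have "real n * hh n = (NN n - 1) / 2 * hh n" by (simp add: NN_def)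
  also have "\<dots> = (NN n * hh n - hh n) / 2" by (simp add: algebra_simps)
  also have "\<dots> = pi - hh n / 2" using NNhh by simp
  finally show ?thesis .
qed
lemma bb_le: "bb n \<le> hh n / 2"
proof -
  have "3 \<le> pi" using pi_gt3 by simp
  thus ?thesis using NN_pos[of n] by (simp add: bb_def hh_def field_simps)
qed
lemma bb_pos: "bb n > 0" using NN_pos[of n] by (simp add: bb_def)
lemma h_small: "2 * hh n \<le> pi"
proof -
  have "4 * pi \<le> 5 * pi" by simp
  also have "\<dots> \<le> NN n * pi" using N5 by (intro mult_right_mono) auto
  finally show ?thesis using NN_pos[of n] by (simp add: hh_def field_simps)
qed

lemma concave_g: "concave_on {bb n..2*pi - bb n} (gg (rr n))"
  unfolding bb_def using gg_concave n by simp

lemma scale_ineq: "ee p n * X \<le> hh n * T \<Longrightarrow> ss p * X \<le> T"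
proof -
  assume a: "ee p n * X \<le> hh n * T"
  have "hh n * (ss p * X) \<le> hh n * T" using a by (simp add: ee_eq mult_ac)
  thus ?thesis using hpos by simp
qed

lemma scale_ineq2: "hh n * X \<le> ee p n * Y \<Longrightarrow> X \<le> ss p * Y"
proof -
  assume a: "hh n * X \<le> ee p n * Y"
  have "hh n * X \<le> hh n * (ss p * Y)" using a by (simp add: ee_eq mult_ac)
  thus ?thesis using hpos by simp
qed

lemma termLp:
  assumes "phi - ee p n \<ge> bb n" "phi + hh n \<le> 2*pi - bb n"
  shows "gg (rr n) phi - gg (rr n) (phi - ee p n) \<ge> ss p * (gg (rr n) (phi + hh n) - gg (rr n) phi)"
proof -
  have "(phi - (phi - ee p n)) * (gg (rr n) (phi + hh n) - gg (rr n) phi) \<le> (phi + hh n - phi) * (gg (rr n) phi - gg (rr n) (phi - ee p n))"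
    by (rule concave_chord[OF concave_g]) (use assms ee_pos hpos bb_pos in auto)
  thus ?thesis by (intro scale_ineq) simp
qed

lemma termLm:
  assumes "- phi - hh n \<ge> bb n" "- phi + ee p n \<le> 2*pi - bb n"
  shows "gg (rr n) phi - gg (rr n) (phi - ee p n) \<ge> ss p * (gg (rr n) (phi + hh n) - gg (rr n) phi)"
proof -
  define y where "y = - phi"
  have "(y - (y - hh n)) * (gg (rr n) (y + ee p n) - gg (rr n) y) \<le> (y + ee p n - y) * (gg (rr n) y - gg (rr n) (y - hh n))"
    by (rule concave_chord[OF concave_g]) (use assms ee_pos hpos bb_pos y_def in auto)
  hence "gg (rr n) (y + ee p n) - gg (rr n) y \<le> ss p * (gg (rr n) y - gg (rr n) (y - hh n))"
    by (intro scale_ineq2) simp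
  moreover have "gg (rr n) (y + ee p n) = gg (rr n) (phi - ee p n)"
    using gg_periodic(3)[of "rr n" "y + ee p n"] by (simp add: y_def)
  moreover have "gg (rr n) y = gg (rr n) phi" using gg_periodic(3) by (simp add: y_def)
  moreover have "gg (rr n) (y - hh n) = gg (rr n) (phi + hh n)"
    using gg_periodic(3)[of "rr n" "y - hh n"] by (simp add: y_def add.commute)
  ultimately show ?thesis by (simp add: right_diff_distrib)
qed

lemma termUp:
  assumes "phi - ee p n - hh n \<ge> bb n" "phi \<le> 2*pi - bb n"
  shows "gg (rr n) phi - gg (rr n) (phi - ee p n) \<le> ss p * (gg (rr n) (phi - ee p n) - gg (rr n) (phi - ee p n - hh n))"
proof -
  have "(phi - ee p n - (phi - ee p n - hh n)) * (gg (rr n) phi - gg (rr n) (phi - ee p n)) \<le> (phi - (phi - ee p n)) * (gg (rr n) (phi - ee p n) - gg (rr n) (phi - ee p n - hh n))"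
    by (rule concave_chord[OF concave_g]) (use assms ee_pos hpos bb_pos in auto)
  thus ?thesis by (intro scale_ineq2) simp
qed

lemma termUm:
  assumes "- phi \<ge> bb n" "- phi + ee p n + hh n \<le> 2*pi - bb n"
  shows "gg (rr n) phi - gg (rr n) (phi - ee p n) \<le> ss p * (gg (rr n) (phi - ee p n) - gg (rr n) (phi - ee p n - hh n))"
proof -
  define y where "y = - phi"
  have "(y + ee p n - y) * (gg (rr n) (y + ee p n + hh n) - gg (rr n) (y + ee p n)) \<le> (y + ee p n + hh n - (y + ee p n)) * (gg (rr n) (y + ee p n) - gg (rr n) y)"
    by (rule concave_chord[OF concave_g]) (use assms ee_pos hpos bb_pos y_def in auto)
  hence "ss p * (gg (rr n) (y + ee p n + hh n) - gg (rr n) (y + ee p n)) \<le> gg (rr n) (y + ee p n) - gg (rr n) y"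
    by (intro scale_ineq) simp
  moreover have "gg (rr n) (y + ee p n) = gg (rr n) (phi - ee p n)"
    using gg_periodic(3)[of "rr n" "y + ee p n"] by (simp add: y_def)
  moreover have "gg (rr n) y = gg (rr n) phi" using gg_periodic(3) by (simp add: y_def)
  moreover have "gg (rr n) (y + ee p n + hh n) = gg (rr n) (phi - ee p n - hh n)"
    using gg_periodic(3)[of "rr n" "y + ee p n + hh n"] by (simp add: y_def algebra_simps)
  ultimately show ?thesis by (simp add: right_diff_distrib)
qed

lemma KK_pos: "KK \<ge> 0" unfolding KK_def using pi_gt3 by simp

lemma ln_small: assumes "0 \<le> a" "a \<le> 3 * hh n" shows "ln (1 / NN n + a) \<le> KK - ln (NN n)"
proof -
  have N: "NN n > 0" by (rule NN_pos)
  have "1 / NN n + a \<le> 1 / NN n + 3 * hh n" using assms by simp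
  also have "\<dots> = (1 + 6 * pi) / NN n" using N by (simp add: hh_def field_simps)
  finally have le: "1 / NN n + a \<le> (1 + 6 * pi) / NN n" .
  have "ln (1 / NN n + a) \<le> ln ((1 + 6 * pi) / NN n)"
  proof -
    have a1: "0 < 1 / NN n + a" using N assms by (simp add: add_pos_nonneg)
    have a2: "0 < (1 + 6 * pi) / NN n" using N pi_gt3 by simp
    show ?thesis using le ln_le_cancel_iff[OF a1 a2] by simp
  qed
  also have "\<dots> = KK - ln (NN n)" using N pi_gt3 by (simp add: KK_def ln_div)
  finally show ?thesis .
qed

lemma gdiff_upper: assumes "\<bar>x\<bar> \<le> 3 * hh n" shows "gg (rr n) x - gg (rr n) y \<le> KK"
  using gg_upper[of n x] gg_lower[of n y] ln_small[of "\<bar>x\<bar>"] assms by simp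

lemma s_times_le: assumes "X \<le> KK" shows "ss p * X \<le> KK"
proof (cases "X \<ge> 0")
  case True
  have "ss p * X \<le> 1 * X" using ss_bounds[OF p] True by (intro mult_right_mono) auto
  thus ?thesis using assms by simp
next
  case False
  hence "ss p * X \<le> 0" using ss_bounds[OF p] by (simp add: mult_pos_neg less_imp_le)
  thus ?thesis using KK_pos by simp
qed

lemma termLM:
  assumes "\<bar>phi - ee p n\<bar> \<le> 3 * hh n" "\<bar>phi + hh n\<bar> \<le> 3 * hh n"
  shows "gg (rr n) phi - gg (rr n) (phi - ee p n) \<ge> ss p * (gg (rr n) (phi + hh n) - gg (rr n) phi) - 2 * KK"
proof -
  have "gg (rr n) (phi - ee p n) - gg (rr n) phi \<le> KK" by (rule gdiff_upper[OF assms(1)])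
  moreover have "ss p * (gg (rr n) (phi + hh n) - gg (rr n) phi) \<le> KK"
    by (rule s_times_le, rule gdiff_upper[OF assms(2)])
  ultimately show ?thesis by simp
qed

lemma termUM:
  assumes "\<bar>phi\<bar> \<le> 3 * hh n" "\<bar>phi - ee p n - hh n\<bar> \<le> 3 * hh n"
  shows "gg (rr n) phi - gg (rr n) (phi - ee p n) \<le> ss p * (gg (rr n) (phi - ee p n) - gg (rr n) (phi - ee p n - hh n)) + 2 * KK"
proof -
  have "gg (rr n) phi - gg (rr n) (phi - ee p n) \<le> KK" by (rule gdiff_upper[OF assms(1)])
  moreover have "ss p * (gg (rr n) (phi - ee p n - hh n) - gg (rr n) (phi - ee p n)) \<le> KK"
    by (rule s_times_le, rule gdiff_upper[OF assms(2)])
  ultimately show ?thesis by (simp add: right_diff_distrib)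
qed

end


definition lam :: "real \<Rightarrow> real \<Rightarrow> real \<Rightarrow> real" where
  "lam a h x = max 0 (min 5 ((x - a) / h + 1))"

lemma lam_mono: "h > 0 \<Longrightarrow> x \<le> y \<Longrightarrow> lam a h x \<le> lam a h y"
  unfolding lam_def by (intro max.mono min.mono) (auto simp: divide_right_mono)

lemma lam_step: assumes "h > 0" "a < x" "x < a + 3 * h" shows "lam a h (x + h) - lam a h x \<ge> 1"
proof -
  have "(x - a) / h < 3" using assms by (simp add: field_simps)
  moreover have "0 < (x - a) / h" using assms by simp
  moreover have "(x + h - a) / h = (x - a) / h + 1" using assms by (simp add: field_simps)
  ultimately show ?thesis unfolding lam_def by simp
qed

lemma lam_bounds: "0 \<le> lam a h x" "lam a h x \<le> 5"
  unfolding lam_def by auto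

lemma cos_nonpos: assumes "pi/2 \<le> x" "x \<le> 3*pi/2" shows "cos x \<le> 0"
proof -
  have "0 \<le> cos (x - pi)" using assms by (intro cos_ge_zero) auto
  thus ?thesis by simp
qed

context
  fixes p :: real and n :: nat
  assumes p: "p > 1" and n: "n \<ge> 2"
begin

definition PhiL :: "real \<Rightarrow> real" where
  "PhiL x = ss p * gg (rr n) x - 2 * KK * lam (- (hh n + bb n)) (hh n) x"
definition PsiU :: "real \<Rightarrow> real" where
  "PsiU x = ss p * gg (rr n) x + 2 * KK * lam (- (bb n + ee p n + hh n)) (hh n) x"

lemma combL:
  assumes t: "pi/2 \<le> t" "t \<le> pi" and k: "k \<le> n"
  defines "phi \<equiv> t - real k * hh n"
  shows "gg (rr n) phi - gg (rr n) (phi - ee p n) \<ge> PhiL (phi + hh n) - PhiL phi"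
proof -
  have h: "hh n > 0" by (rule hpos[OF p n])
  have e: "0 < ee p n" "ee p n \<le> hh n / 2" using ee_pos[OF p n] ee_le[OF p n] by auto
  have b: "0 < bb n" "bb n \<le> hh n / 2" using bb_pos[OF p n] bb_le[OF p n] by auto
  have hs: "2 * hh n \<le> pi" by (rule h_small[OF p n])
  have nh: "real n * hh n = pi - hh n / 2" by (rule nhh[OF p n])
  have kh: "real k * hh n \<le> real n * hh n" using k h by (intro mult_right_mono) auto
  have phi_le: "phi \<le> t" using h by (simp add: phi_def)
  have phi_ge: "- phi \<le> pi / 2" using kh nh t h by (simp add: phi_def)
  have K: "KK \<ge> 0" by (rule KK_pos[OF p n])
  define la where "la = lam (- (hh n + bb n)) (hh n)"
  have L: "PhiL (phi + hh n) - PhiL phi = ss p * (gg (rr n) (phi + hh n) - gg (rr n) phi) - 2 * KK * (la (phi + hh n) - la phi)"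
    unfolding PhiL_def la_def by (simp add: algebra_simps)
  have lm: "la phi \<le> la (phi + hh n)" unfolding la_def using h by (intro lam_mono) auto
  consider "phi \<ge> bb n + ee p n" | "phi \<le> - (hh n + bb n)" | "- (hh n + bb n) < phi" "phi < bb n + ee p n" by linarith
  thus ?thesis
  proof cases
    case 1
    have "ss p * (gg (rr n) (phi + hh n) - gg (rr n) phi) \<le> gg (rr n) phi - gg (rr n) (phi - ee p n)"
      by (rule termLp[OF p n]) (use 1 phi_le t hs b in auto)
    moreover have "0 \<le> 2 * KK * (la (phi + hh n) - la phi)" using K lm by simp
    ultimately show ?thesis unfolding L by linarith
  next
    case 2
    have "ss p * (gg (rr n) (phi + hh n) - gg (rr n) phi) \<le> gg (rr n) phi - gg (rr n) (phi - ee p n)"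
      by (rule termLm[OF p n]) (use 2 phi_ge t hs b e in auto)
    moreover have "0 \<le> 2 * KK * (la (phi + hh n) - la phi)" using K lm by simp
    ultimately show ?thesis unfolding L by linarith
  next
    case 3
    have "ss p * (gg (rr n) (phi + hh n) - gg (rr n) phi) - 2 * KK \<le> gg (rr n) phi - gg (rr n) (phi - ee p n)"
      by (rule termLM[OF p n]) (use 3 b e h in auto)
    moreover have "la (phi + hh n) - la phi \<ge> 1" unfolding la_def
      by (rule lam_step) (use 3 b e h in auto)
    hence "2 * KK \<le> 2 * KK * (la (phi + hh n) - la phi)" using K
      by (metis mult.right_neutral mult_left_mono zero_le_numeral zero_le_mult_iff)
    ultimately show ?thesis unfolding L by linarith
  qed
qed

lemma combU:
  assumes t: "0 \<le> t" "t \<le> pi/2" and k: "k \<le> n"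
  defines "phi \<equiv> t - real k * hh n"
  shows "gg (rr n) phi - gg (rr n) (phi - ee p n) \<le> PsiU (phi - ee p n) - PsiU (phi - ee p n - hh n)"
proof -
  have h: "hh n > 0" by (rule hpos[OF p n])
  have e: "0 < ee p n" "ee p n \<le> hh n / 2" using ee_pos[OF p n] ee_le[OF p n] by auto
  have b: "0 < bb n" "bb n \<le> hh n / 2" using bb_pos[OF p n] bb_le[OF p n] by auto
  have hs: "2 * hh n \<le> pi" by (rule h_small[OF p n])
  have nh: "real n * hh n = pi - hh n / 2" by (rule nhh[OF p n])
  have kh: "real k * hh n \<le> real n * hh n" using k h by (intro mult_right_mono) auto
  have "0 \<le> real k * hh n" using h by simp
  hence phi_le: "phi \<le> pi / 2" using t by (simp add: phi_def)
  have phi_ge: "- phi \<le> pi" using kh nh t h by (simp add: phi_def)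
  have K: "KK \<ge> 0" by (rule KK_pos[OF p n])
  define la where "la = lam (- (bb n + ee p n + hh n)) (hh n)"
  have L: "PsiU (phi - ee p n) - PsiU (phi - ee p n - hh n) = ss p * (gg (rr n) (phi - ee p n) - gg (rr n) (phi - ee p n - hh n)) + 2 * KK * (la (phi - ee p n) - la (phi - ee p n - hh n))"
    unfolding PsiU_def la_def by (simp add: algebra_simps)
  have lm: "la (phi - ee p n - hh n) \<le> la (phi - ee p n)" unfolding la_def using h by (intro lam_mono) auto
  consider "phi \<ge> bb n + ee p n + hh n" | "phi \<le> - bb n" | "- bb n < phi" "phi < bb n + ee p n + hh n" by linarith
  thus ?thesis
  proof cases
    case 1
    have "gg (rr n) phi - gg (rr n) (phi - ee p n) \<le> ss p * (gg (rr n) (phi - ee p n) - gg (rr n) (phi - ee p n - hh n))"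
      by (rule termUp[OF p n]) (use 1 phi_le t hs b in auto)
    moreover have "0 \<le> 2 * KK * (la (phi - ee p n) - la (phi - ee p n - hh n))" using K lm by simp
    ultimately show ?thesis unfolding L by linarith
  next
    case 2
    have "gg (rr n) phi - gg (rr n) (phi - ee p n) \<le> ss p * (gg (rr n) (phi - ee p n) - gg (rr n) (phi - ee p n - hh n))"
      by (rule termUm[OF p n]) (use 2 phi_ge t hs b e in auto)
    moreover have "0 \<le> 2 * KK * (la (phi - ee p n) - la (phi - ee p n - hh n))" using K lm by simp
    ultimately show ?thesis unfolding L by linarith
  next
    case 3
    have "gg (rr n) phi - gg (rr n) (phi - ee p n) \<le> ss p * (gg (rr n) (phi - ee p n) - gg (rr n) (phi - ee p n - hh n)) + 2 * KK"
      by (rule termUM[OF p n]) (use 3 b e h in auto)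
    moreover have "la (phi - ee p n - hh n + hh n) - la (phi - ee p n - hh n) \<ge> 1" unfolding la_def
      by (rule lam_step) (use 3 b e h in auto)
    hence "2 * KK \<le> 2 * KK * (la (phi - ee p n) - la (phi - ee p n - hh n))" using K
      by (metis diff_add_cancel mult.right_neutral mult_left_mono zero_le_numeral zero_le_mult_iff)
    ultimately show ?thesis unfolding L by linarith
  qed
qed

end


lemma rr_pow_le: "rr n ^ (2*n+1) \<le> 1/2"
proof -
  have N: "NN n > 0" by (rule NN_pos)
  have r: "rr n = 1 + (- 1 / NN n)" using one_minus_rr[of n] by simp
  have "rr n \<le> exp (- 1 / NN n)" unfolding r by (rule exp_ge_add_one_self)
  hence "rr n ^ (2*n+1) \<le> exp (- 1 / NN n) ^ (2*n+1)"
    using rr_bounds(1) by (intro power_mono) auto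
  also have "\<dots> = exp (real (2*n+1) * (- 1 / NN n))" by (rule exp_of_nat_mult[symmetric])
  also have "real (2*n+1) * (- 1 / NN n) = -1" using N by (simp add: NN_def)
  also have "exp (-1::real) \<le> 1/2"
  proof -
    have "2 \<le> exp (1::real)" using exp_ge_add_one_self[of 1] by simp
    thus ?thesis by (simp add: exp_minus field_simps)
  qed
  finally show ?thesis .
qed

lemma Bterm_bounds:
  assumes "0 \<le> c" "c \<le> 1/2"
  shows "ln (1/2) \<le> ln (cmod (1 - complex_of_real c * cis x))" "ln (cmod (1 - complex_of_real c * cis x)) \<le> ln 2"
proof -
  have nc: "cmod (complex_of_real c * cis x) = c" using assms by (simp add: norm_mult)
  have "cmod (1::complex) \<le> cmod (1 - complex_of_real c * cis x) + cmod (complex_of_real c * cis x)"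
    by (metis diff_add_cancel norm_triangle_ineq)
  hence lo: "1/2 \<le> cmod (1 - complex_of_real c * cis x)" using nc assms by simp
  have "cmod (1 - complex_of_real c * cis x) \<le> cmod (1::complex) + cmod (complex_of_real c * cis x)"
    by (rule norm_triangle_ineq4)
  hence hi: "cmod (1 - complex_of_real c * cis x) \<le> 2" using nc assms by simp
  show "ln (1/2) \<le> ln (cmod (1 - complex_of_real c * cis x))" using lo by (subst ln_le_cancel_iff) auto
  show "ln (cmod (1 - complex_of_real c * cis x)) \<le> ln 2" using lo hi by (subst ln_le_cancel_iff) auto
qed

context
  fixes p :: real and n :: nat
  assumes p: "p > 1" and n: "n \<ge> 2"
begin

definition DD :: "real \<Rightarrow> real" where
  "DD t = (\<Sum>k\<in>{0..n}. gg (rr n) (t - real k * hh n) - gg (rr n) (t - ee p n - real k * hh n))"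

lemma DD_lower:
  assumes t: "pi/2 \<le> t" "t \<le> pi"
  shows "DD t \<ge> - 10 * KK - ss p * ln (1 / NN n + (pi - t) + hh n)"
proof -
  have h: "hh n > 0" by (rule hpos[OF p n])
  have s: "0 < ss p" using ss_bounds[OF p] by simp
  have K: "KK \<ge> 0" by (rule KK_pos[OF p n])
  define f where "f i = PhiL p n (t + hh n - real i * hh n)" for i :: nat
  have "(\<Sum>k\<le>n. f k - f (Suc k)) \<le> DD t"
    unfolding DD_def atLeast0AtMost[symmetric]
  proof (rule sum_mono)
    fix k assume k: "k \<in> {0..n}"
    have "PhiL p n (t - real k * hh n + hh n) - PhiL p n (t - real k * hh n) \<le> gg (rr n) (t - real k * hh n) - gg (rr n) (t - real k * hh n - ee p n)"
      by (rule combL[OF p n t]) (use k in auto)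
    moreover have "f k = PhiL p n (t - real k * hh n + hh n)" by (simp add: f_def algebra_simps)
    moreover have "f (Suc k) = PhiL p n (t - real k * hh n)" by (simp add: f_def algebra_simps)
    moreover have "t - real k * hh n - ee p n = t - ee p n - real k * hh n" by simp
    ultimately show "f k - f (Suc k) \<le> gg (rr n) (t - real k * hh n) - gg (rr n) (t - ee p n - real k * hh n)" by simp
  qed
  also have "(\<Sum>k\<le>n. f k - f (Suc k)) = f 0 - f (Suc n)" by (rule sum_telescope)
  finally have D: "f 0 - f (Suc n) \<le> DD t" .
  have f0: "f 0 \<ge> - 10 * KK"
  proof -
    have "cos (t + hh n) \<le> 0" using t h h_small[OF p n] by (intro cos_nonpos) auto
    hence "gg (rr n) (t + hh n) \<ge> 0" by (rule gg_nonneg)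
    hence "ss p * gg (rr n) (t + hh n) \<ge> 0" using s by simp
    moreover have "lam (- (hh n + bb n)) (hh n) (t + hh n) \<le> 5" by (rule lam_bounds)
    hence "2 * KK * lam (- (hh n + bb n)) (hh n) (t + hh n) \<le> 2 * KK * 5" using K by (intro mult_left_mono) auto
    ultimately show ?thesis by (simp add: f_def PhiL_def[OF p n])
  qed
  have fn: "f (Suc n) \<le> ss p * ln (1 / NN n + (pi - t) + hh n)"
  proof -
    have x: "t + hh n - real (Suc n) * hh n = t - (pi - hh n / 2)"
      using nhh[OF p n] by (simp add: algebra_simps)
    have ab: "\<bar>t - (pi - hh n / 2)\<bar> \<le> (pi - t) + hh n" using t h by auto
    have "gg (rr n) (t - (pi - hh n / 2)) \<le> ln (1 / NN n + \<bar>t - (pi - hh n / 2)\<bar>)" by (rule gg_upper)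
    also have "\<dots> \<le> ln (1 / NN n + (pi - t) + hh n)"
    proof -
      have iN: "0 < 1 / NN n" using NN_pos[of n] by simp
      have pA: "0 < 1 / NN n + \<bar>t - (pi - hh n / 2)\<bar>" using iN by (simp add: add_pos_nonneg)
      have pB: "0 < 1 / NN n + (pi - t) + hh n" using iN t h by linarith
      show ?thesis using ln_le_cancel_iff[OF pA pB] ab by simp
    qed
    finally have "ss p * gg (rr n) (t - (pi - hh n / 2)) \<le> ss p * ln (1 / NN n + (pi - t) + hh n)"
      using s by (intro mult_left_mono) auto
    moreover have "0 \<le> 2 * KK * lam (- (hh n + bb n)) (hh n) (t - (pi - hh n / 2))"
      using K lam_bounds(1) by simp
    ultimately show ?thesis unfolding f_def PhiL_def[OF p n] x by linarith
  qed
  show ?thesis using D f0 fn by linarith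
qed

lemma DD_upper:
  assumes t: "0 \<le> t" "t \<le> pi/2"
  shows "DD t \<le> 10 * KK + ss p * ln (1 / NN n + t + hh n)"
proof -
  have h: "hh n > 0" by (rule hpos[OF p n])
  have e: "0 < ee p n" "ee p n \<le> hh n / 2" using ee_pos[OF p n] ee_le[OF p n] by auto
  have s: "0 < ss p" using ss_bounds[OF p] by simp
  have K: "KK \<ge> 0" by (rule KK_pos[OF p n])
  define f where "f i = PsiU p n (t - ee p n - real i * hh n)" for i :: nat
  have "DD t \<le> (\<Sum>k\<le>n. f k - f (Suc k))"
    unfolding DD_def atLeast0AtMost[symmetric]
  proof (rule sum_mono)
    fix k assume k: "k \<in> {0..n}"
    have "gg (rr n) (t - real k * hh n) - gg (rr n) (t - real k * hh n - ee p n) \<le> PsiU p n (t - real k * hh n - ee p n) - PsiU p n (t - real k * hh n - ee p n - hh n)"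
      by (rule combU[OF p n t]) (use k in auto)
    moreover have "f k = PsiU p n (t - real k * hh n - ee p n)" by (simp add: f_def algebra_simps)
    moreover have "f (Suc k) = PsiU p n (t - real k * hh n - ee p n - hh n)" by (simp add: f_def algebra_simps)
    moreover have "t - real k * hh n - ee p n = t - ee p n - real k * hh n" by simp
    ultimately show "gg (rr n) (t - real k * hh n) - gg (rr n) (t - ee p n - real k * hh n) \<le> f k - f (Suc k)" by simp
  qed
  also have "(\<Sum>k\<le>n. f k - f (Suc k)) = f 0 - f (Suc n)" by (rule sum_telescope)
  finally have D: "DD t \<le> f 0 - f (Suc n)" .
  have f0: "f 0 \<le> 10 * KK + ss p * ln (1 / NN n + t + hh n)"
  proof -
    have ab: "\<bar>t - ee p n\<bar> \<le> t + hh n" using t e h by auto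
    have "gg (rr n) (t - ee p n) \<le> ln (1 / NN n + \<bar>t - ee p n\<bar>)" by (rule gg_upper)
    also have "\<dots> \<le> ln (1 / NN n + t + hh n)"
    proof -
      have iN: "0 < 1 / NN n" using NN_pos[of n] by simp
      have pA: "0 < 1 / NN n + \<bar>t - ee p n\<bar>" using iN by (simp add: add_pos_nonneg)
      have pB: "0 < 1 / NN n + t + hh n" using iN t h by linarith
      show ?thesis using ln_le_cancel_iff[OF pA pB] ab by simp
    qed
    finally have "ss p * gg (rr n) (t - ee p n) \<le> ss p * ln (1 / NN n + t + hh n)"
      using s by (intro mult_left_mono) auto
    moreover have "lam (- (bb n + ee p n + hh n)) (hh n) (t - ee p n) \<le> 5" by (rule lam_bounds)
    hence "2 * KK * lam (- (bb n + ee p n + hh n)) (hh n) (t - ee p n) \<le> 2 * KK * 5" using K by (intro mult_left_mono) auto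
    ultimately show ?thesis by (simp add: f_def PsiU_def[OF p n])
  qed
  have fn: "f (Suc n) \<ge> 0"
  proof -
    define x where "x = t - ee p n - real (Suc n) * hh n"
    have x: "- x = pi + hh n / 2 + ee p n - t"
      using nhh[OF p n] by (simp add: x_def algebra_simps)
    have "cos (- x) \<le> 0" unfolding x using t h e h_small[OF p n] by (intro cos_nonpos) auto
    hence "gg (rr n) x \<ge> 0" by (intro gg_nonneg) simp
    hence "ss p * gg (rr n) x \<ge> 0" using s by simp
    moreover have "0 \<le> 2 * KK * lam (- (bb n + ee p n + hh n)) (hh n) x"
      using K lam_bounds(1) by simp
    ultimately show ?thesis unfolding f_def PsiU_def[OF p n] x_def by linarith
  qed
  show ?thesis using D f0 fn by linarith
qed

end


lemma F_nz: "Fpoly p n (cis t) \<noteq> 0"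
proof -
  have "(\<Prod>k\<in>{0..n}. 1 - complex_of_real (rr n) * cis (t - real k * hh n)) \<noteq> 0"
    using cmod_factor_pos[OF rr_bounds] by (auto simp: prod_zero_iff)
  moreover have "(\<Prod>j\<in>{1..n}. 1 - complex_of_real (rr n) * cis (t + real j * hh n - ee p n)) \<noteq> 0"
    using cmod_factor_pos[OF rr_bounds] by (auto simp: prod_zero_iff)
  ultimately show ?thesis unfolding Fpoly_split by simp
qed

lemma F_pos: "cmod (Fpoly p n (cis t)) > 0" using F_nz by simp

lemma F_cont: "continuous_on S (\<lambda>t. cmod (Fpoly p n (cis t)) powr a)"
proof -
  have "continuous_on S (\<lambda>t. Fpoly p n (cis t))"
    unfolding Fpoly_def by (intro continuous_intros)
  hence "continuous_on S (\<lambda>t. cmod (Fpoly p n (cis t)))" by (intro continuous_intros)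
  thus ?thesis using F_nz by (intro continuous_on_powr continuous_on_const) auto
qed

lemma LBINT_eq: "(LBINT t=0..pi. cmod (Fpoly p n (cis t)) powr a) = integral {0..pi} (\<lambda>t. cmod (Fpoly p n (cis t)) powr a)"
proof -
  have "(LBINT t=ereal 0..ereal pi. cmod (Fpoly p n (cis t)) powr a) = integral {0..pi} (\<lambda>t. cmod (Fpoly p n (cis t)) powr a)"
    by (rule interval_integral_eq_integral) (auto intro!: borel_integrable_atLeastAtMost' F_cont)
  thus ?thesis by (simp add: zero_ereal_def)
qed

lemma F_integrable: "(\<lambda>t. cmod (Fpoly p n (cis t)) powr a) integrable_on {x..y}"
  by (rule integrable_continuous_interval, rule F_cont)

context
  fixes p :: real and n :: nat
  assumes p: "p > 1" and n: "n \<ge> 2"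
begin

lemma lnF_DD: "ln (cmod (Fpoly p n (cis t))) = ln (cmod (1 - complex_of_real (rr n ^ (2*n+1)) * cis (NN n * (t - ee p n)))) + DD p n t"
  using lnF[of p n t] by (simp add: DD_def[OF p n])

lemma small_shift: "1 / NN n + hh n \<le> 9 / NN n"
proof -
  have "1 + 2 * pi \<le> 9" using pi_less_4 by simp
  thus ?thesis using NN_pos[of n] by (simp add: hh_def field_simps)
qed

lemma F_lower:
  assumes t: "pi/2 \<le> t" "t \<le> pi"
  shows "ln (cmod (Fpoly p n (cis t))) \<ge> ln (1/2) - 10 * KK - ss p * ln (pi - t + 9 / NN n)"
proof -
  have B: "ln (1/2) \<le> ln (cmod (1 - complex_of_real (rr n ^ (2*n+1)) * cis (NN n * (t - ee p n))))"
    using Bterm_bounds(1)[OF _ rr_pow_le] rr_bounds(1)[of n] by simp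
  have s: "0 < ss p" using ss_bounds[OF p] by simp
  have h: "hh n > 0" by (rule hpos[OF p n])
  have iN: "0 < 1 / NN n" using NN_pos[of n] by simp
  have "ln (1 / NN n + (pi - t) + hh n) \<le> ln (pi - t + 9 / NN n)"
  proof -
    have pA: "0 < 1 / NN n + (pi - t) + hh n" using iN t h by linarith
    have pB: "0 < pi - t + 9 / NN n" using pA small_shift by linarith
    show ?thesis using ln_le_cancel_iff[OF pA pB] small_shift by simp
  qed
  hence "ss p * ln (1 / NN n + (pi - t) + hh n) \<le> ss p * ln (pi - t + 9 / NN n)"
    using s by (intro mult_left_mono) auto
  thus ?thesis using lnF_DD[of t] DD_lower[OF p n t] B by linarith
qed

lemma F_upper:
  assumes t: "0 \<le> t" "t \<le> pi/2"
  shows "ln (cmod (Fpoly p n (cis t))) \<le> ln 2 + 10 * KK + ss p * ln (t + 9 / NN n)"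
proof -
  have B: "ln (cmod (1 - complex_of_real (rr n ^ (2*n+1)) * cis (NN n * (t - ee p n)))) \<le> ln 2"
    using Bterm_bounds(2)[OF _ rr_pow_le] rr_bounds(1)[of n] by simp
  have s: "0 < ss p" using ss_bounds[OF p] by simp
  have h: "hh n > 0" by (rule hpos[OF p n])
  have iN: "0 < 1 / NN n" using NN_pos[of n] by simp
  have "ln (1 / NN n + t + hh n) \<le> ln (t + 9 / NN n)"
  proof -
    have pA: "0 < 1 / NN n + t + hh n" using iN t h by linarith
    have pB: "0 < t + 9 / NN n" using pA small_shift by linarith
    show ?thesis using ln_le_cancel_iff[OF pA pB] small_shift by simp
  qed
  hence "ss p * ln (1 / NN n + t + hh n) \<le> ss p * ln (t + 9 / NN n)"
    using s by (intro mult_left_mono) auto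
  thus ?thesis using lnF_DD[of t] DD_upper[OF p n t] B by linarith
qed

end


lemma int_inv1:
  assumes a: "a > 0"
  shows "integral {0..pi/2} (\<lambda>t. 1 / (t + a)) = ln (pi/2 + a) - ln a"
proof -
  have "((\<lambda>t. 1 / (t + a)) has_integral (ln (pi/2 + a) - ln (0 + a))) {0..pi/2}"
  proof (rule fundamental_theorem_of_calculus)
    show "0 \<le> pi/2" by simp
    fix x assume x: "x \<in> {0..pi/2}"
    have "((\<lambda>t. ln (t + a)) has_real_derivative 1 / (x + a)) (at x)"
      using x a by (auto intro!: derivative_eq_intros)
    thus "((\<lambda>t. ln (t + a)) has_vector_derivative 1 / (x + a)) (at x within {0..pi/2})"
      by (simp add: has_real_derivative_iff_has_vector_derivative has_vector_derivative_at_within)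
  qed
  thus ?thesis by (simp add: integral_unique)
qed

lemma int_inv2:
  assumes a: "a > 0"
  shows "integral {pi/2..pi} (\<lambda>t. 1 / (pi - t + a)) = ln (pi/2 + a) - ln a"
proof -
  have "((\<lambda>t. 1 / (pi - t + a)) has_integral ((- ln (pi - pi + a)) - (- ln (pi - pi/2 + a)))) {pi/2..pi}"
  proof (rule fundamental_theorem_of_calculus)
    show "pi/2 \<le> pi" by simp
    fix x assume x: "x \<in> {pi/2..pi}"
    have "((\<lambda>t. - ln (pi - t + a)) has_real_derivative 1 / (pi - x + a)) (at x)"
      using x a by (auto intro!: derivative_eq_intros)
    thus "((\<lambda>t. - ln (pi - t + a)) has_vector_derivative 1 / (pi - x + a)) (at x within {pi/2..pi})"
      by (simp add: has_real_derivative_iff_has_vector_derivative has_vector_derivative_at_within)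
  qed
  thus ?thesis by (simp add: integral_unique)
qed

lemma lim_aux:
  assumes "C > 0" "al > 0"
  shows "filterlim (\<lambda>n::nat. C * ln (pi * NN n / 18) powr al) at_top sequentially"
  unfolding NN_def using assms by real_asymp


lemma ss_eq: "p > 1 \<Longrightarrow> ss p = 1 / max p (p / (p - 1))"
  by (simp add: ss_def pert_delta_def)

lemma Fpowr: "cmod (Fpoly p n (cis t)) powr a = exp (a * ln (cmod (Fpoly p n (cis t))))"
  using F_nz[of p n t] by (simp add: powr_def)

lemma s_ln_le4: assumes "0 < (s::real)" "s \<le> 1" "0 < (x::real)" "x \<le> 4" shows "s * ln x \<le> ln 4"
proof (cases "ln x \<ge> 0")
  case True
  have "s * ln x \<le> 1 * ln x" using True assms by (intro mult_right_mono) auto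
  also have "\<dots> \<le> ln 4" using assms by simp
  finally show ?thesis .
next
  case False
  hence "s * ln x \<le> 0" using assms by (simp add: mult_pos_neg less_imp_le)
  moreover have "0 \<le> ln (4::real)" by simp
  ultimately show ?thesis by linarith
qed

lemma Ap_lower:
  assumes p: "p > 1"
    and A: "0 \<le> A" "A \<le> (LBINT t=0..pi. cmod (Fpoly p n (cis t)) powr p)"
    and B: "0 \<le> B" "B \<le> (LBINT t=0..pi. cmod (Fpoly p n (cis t)) powr (- p / (p - 1)))"
  shows "((1/pi) * A) powr (1/p) * ((1/pi) * B) powr ((p-1)/p) \<le> Ap_quot p n"
  unfolding Ap_quot_def
  using A B p by (intro mult_mono powr_mono2 mult_left_mono) auto

context
  fixes p :: real and n :: nat
  assumes p: "p > 1" and n: "n \<ge> 2"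
begin

definition aa where "aa = 9 / NN n"
lemma aa_pos: "aa > 0" using NN_pos[of n] by (simp add: aa_def)
lemma aa_le: "aa \<le> 9/5" using n by (simp add: aa_def NN_def field_simps)

lemma I1_ge_half:
  "integral {pi/2..pi} (\<lambda>t. cmod (Fpoly p n (cis t)) powr p) \<le> (LBINT t=0..pi. cmod (Fpoly p n (cis t)) powr p)"
  unfolding LBINT_eq by (rule integral_subset_le) (auto intro: F_integrable)

lemma I2_ge_half:
  "integral {0..pi/2} (\<lambda>t. cmod (Fpoly p n (cis t)) powr (- p / (p - 1))) \<le> (LBINT t=0..pi. cmod (Fpoly p n (cis t)) powr (- p / (p - 1)))"
  unfolding LBINT_eq by (rule integral_subset_le) (auto intro: F_integrable)

lemma aa_9: "9 / NN n = aa" by (simp add: aa_def)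
lemma pi_half_aa: "pi / 2 + aa \<le> 4" using aa_le pi_less_4 by simp

lemma s01: "0 < ss p" "ss p \<le> 1" using ss_bounds[OF p] by auto

lemma caseA_I1:
  assumes p2: "p \<ge> 2"
  shows "exp (p * (ln (1/2) - 10 * KK)) * (ln (pi/2 + aa) - ln aa) \<le> (LBINT t=0..pi. cmod (Fpoly p n (cis t)) powr p)"
proof -
  define c where "c = exp (p * (ln (1/2) - 10 * KK))"
  have sp: "ss p = 1 / p" using p p2 by (simp add: ss_eq max_def field_simps)
  have pt: "c * (1 / (pi - t + aa)) \<le> cmod (Fpoly p n (cis t)) powr p" if t: "t \<in> {pi/2..pi}" for t
  proof -
    have y: "0 < pi - t + aa" using t aa_pos by auto
    have "ln (cmod (Fpoly p n (cis t))) \<ge> ln (1/2) - 10 * KK - ss p * ln (pi - t + aa)"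
      by (rule F_lower[OF p n, unfolded aa_9]) (use t in auto)
    hence "p * (ln (1/2) - 10 * KK - ss p * ln (pi - t + aa)) \<le> p * ln (cmod (Fpoly p n (cis t)))"
      using p by (intro mult_left_mono) auto
    moreover have "p * (ln (1/2) - 10 * KK - ss p * ln (pi - t + aa)) = p * (ln (1/2) - 10 * KK) - ln (pi - t + aa)"
      using p unfolding sp by (simp add: right_diff_distrib)
    ultimately have "p * ln (cmod (Fpoly p n (cis t))) \<ge> p * (ln (1/2) - 10 * KK) - ln (pi - t + aa)"
      by simp
    hence "exp (p * (ln (1/2) - 10 * KK) - ln (pi - t + aa)) \<le> exp (p * ln (cmod (Fpoly p n (cis t))))"
      by (rule exp_mono)
    also have "exp (p * ln (cmod (Fpoly p n (cis t)))) = cmod (Fpoly p n (cis t)) powr p" by (simp only: Fpowr)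
    also have "exp (p * (ln (1/2) - 10 * KK) - ln (pi - t + aa)) = c * (1 / (pi - t + aa))"
      using y by (simp add: exp_diff c_def)
    finally show ?thesis .
  qed
  have int1: "(\<lambda>t. c * (1 / (pi - t + aa))) integrable_on {pi/2..pi}"
    by (rule integrable_continuous_interval) (use aa_pos in \<open>auto intro!: continuous_intros\<close>)
  have "integral {pi/2..pi} (\<lambda>t. c * (1 / (pi - t + aa))) \<le> integral {pi/2..pi} (\<lambda>t. cmod (Fpoly p n (cis t)) powr p)"
    by (rule integral_le[OF int1 F_integrable pt])
  also have "\<dots> \<le> (LBINT t=0..pi. cmod (Fpoly p n (cis t)) powr p)" by (rule I1_ge_half)
  finally have "integral {pi/2..pi} (\<lambda>t. c * (1 / (pi - t + aa))) \<le> (LBINT t=0..pi. cmod (Fpoly p n (cis t)) powr p)" .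
  moreover have "integral {pi/2..pi} (\<lambda>t. c * (1 / (pi - t + aa))) = c * (ln (pi/2 + aa) - ln aa)"
    using integral_cmul[of "{pi/2..pi}" c "\<lambda>t. 1 / (pi - t + aa)"] int_inv2[OF aa_pos] by simp
  ultimately show ?thesis unfolding c_def by simp
qed

lemma caseA_I2:
  assumes p2: "p \<ge> 2"
  shows "pi / 2 * exp (- (p / (p - 1)) * (ln 2 + 10 * KK + ln 4)) \<le> (LBINT t=0..pi. cmod (Fpoly p n (cis t)) powr (- p / (p - 1)))"
proof -
  define c where "c = exp (- (p / (p - 1)) * (ln 2 + 10 * KK + ln 4))"
  have q: "p / (p - 1) > 0" using p by simp
  have pt: "c \<le> cmod (Fpoly p n (cis t)) powr (- p / (p - 1))" if t: "t \<in> {0..pi/2}" for t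
  proof -
    have s4: "ss p * ln (t + aa) \<le> ln 4"
      by (rule s_ln_le4[OF s01]) (use t aa_pos pi_half_aa in auto)
    have Fu: "ln (cmod (Fpoly p n (cis t))) \<le> ln 2 + 10 * KK + ss p * ln (t + aa)"
      by (rule F_upper[OF p n, unfolded aa_9]) (use t in auto)
    have "ln (cmod (Fpoly p n (cis t))) \<le> ln 2 + 10 * KK + ln 4" using s4 Fu by linarith
    hence m: "(p / (p - 1)) * ln (cmod (Fpoly p n (cis t))) \<le> (p / (p - 1)) * (ln 2 + 10 * KK + ln 4)"
      using q by (intro mult_left_mono) auto
    have e1: "(- p / (p - 1)) * ln (cmod (Fpoly p n (cis t))) = - ((p / (p - 1)) * ln (cmod (Fpoly p n (cis t))))"
      by simp
    have e2: "- (p / (p - 1)) * (ln 2 + 10 * KK + ln 4) = - ((p / (p - 1)) * (ln 2 + 10 * KK + ln 4))" by simp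
    have "- (p / (p - 1)) * (ln 2 + 10 * KK + ln 4) \<le> (- p / (p - 1)) * ln (cmod (Fpoly p n (cis t)))"
      unfolding e1 e2 using m by linarith
    hence "exp (- (p / (p - 1)) * (ln 2 + 10 * KK + ln 4)) \<le> exp ((- p / (p - 1)) * ln (cmod (Fpoly p n (cis t))))"
      by (rule exp_mono)
    thus ?thesis by (simp only: Fpowr c_def)
  qed
  have "integral {0..pi/2} (\<lambda>t. c) \<le> integral {0..pi/2} (\<lambda>t. cmod (Fpoly p n (cis t)) powr (- p / (p - 1)))"
    by (rule integral_le[OF integrable_const_ivl F_integrable pt])
  also have "\<dots> \<le> (LBINT t=0..pi. cmod (Fpoly p n (cis t)) powr (- p / (p - 1)))" by (rule I2_ge_half)
  finally show ?thesis unfolding c_def by simp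
qed

lemma caseB_I2:
  assumes p2: "p < 2"
  shows "exp (- (p / (p - 1)) * (ln 2 + 10 * KK)) * (ln (pi/2 + aa) - ln aa) \<le> (LBINT t=0..pi. cmod (Fpoly p n (cis t)) powr (- p / (p - 1)))"
proof -
  define c where "c = exp (- (p / (p - 1)) * (ln 2 + 10 * KK))"
  have q: "p / (p - 1) > 0" using p by simp
  have sp: "(p / (p - 1)) * ss p = 1"
  proof -
    have "p / (p - 1) \<ge> p" using p p2 by (simp add: field_simps)
    hence "ss p = (p - 1) / p" using p by (simp add: ss_eq max_def)
    thus ?thesis using p by simp
  qed
  have pt: "c * (1 / (t + aa)) \<le> cmod (Fpoly p n (cis t)) powr (- p / (p - 1))" if t: "t \<in> {0..pi/2}" for t
  proof -
    have y: "0 < t + aa" using t aa_pos by auto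
    have Fu: "ln (cmod (Fpoly p n (cis t))) \<le> ln 2 + 10 * KK + ss p * ln (t + aa)"
      by (rule F_upper[OF p n, unfolded aa_9]) (use t in auto)
    hence "(p / (p - 1)) * ln (cmod (Fpoly p n (cis t))) \<le> (p / (p - 1)) * (ln 2 + 10 * KK + ss p * ln (t + aa))"
      using q by (intro mult_left_mono) auto
    also have "\<dots> = (p / (p - 1)) * (ln 2 + 10 * KK) + ((p / (p - 1)) * ss p) * ln (t + aa)"
      by (simp add: algebra_simps)
    also have "\<dots> = (p / (p - 1)) * (ln 2 + 10 * KK) + ln (t + aa)" by (simp only: sp mult_1)
    finally have m: "(p / (p - 1)) * ln (cmod (Fpoly p n (cis t))) \<le> (p / (p - 1)) * (ln 2 + 10 * KK) + ln (t + aa)" .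
    have e1: "(- p / (p - 1)) * ln (cmod (Fpoly p n (cis t))) = - ((p / (p - 1)) * ln (cmod (Fpoly p n (cis t))))"
      by simp
    have e2: "- (p / (p - 1)) * (ln 2 + 10 * KK) = - ((p / (p - 1)) * (ln 2 + 10 * KK))" by simp
    have "(- (p / (p - 1)) * (ln 2 + 10 * KK)) - ln (t + aa) \<le> (- p / (p - 1)) * ln (cmod (Fpoly p n (cis t)))"
      unfolding e1 e2 using m by linarith
    hence "exp ((- (p / (p - 1)) * (ln 2 + 10 * KK)) - ln (t + aa)) \<le> exp ((- p / (p - 1)) * ln (cmod (Fpoly p n (cis t))))"
      by (rule exp_mono)
    also have "exp ((- p / (p - 1)) * ln (cmod (Fpoly p n (cis t)))) = cmod (Fpoly p n (cis t)) powr (- p / (p - 1))"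
      by (simp only: Fpowr)
    also have "exp ((- (p / (p - 1)) * (ln 2 + 10 * KK)) - ln (t + aa)) = c * (1 / (t + aa))"
      using y by (simp add: exp_diff c_def)
    finally show ?thesis .
  qed
  have int1: "(\<lambda>t. c * (1 / (t + aa))) integrable_on {0..pi/2}"
    by (rule integrable_continuous_interval) (use aa_pos in \<open>auto intro!: continuous_intros\<close>)
  have "integral {0..pi/2} (\<lambda>t. c * (1 / (t + aa))) \<le> integral {0..pi/2} (\<lambda>t. cmod (Fpoly p n (cis t)) powr (- p / (p - 1)))"
    by (rule integral_le[OF int1 F_integrable pt])
  also have "\<dots> \<le> (LBINT t=0..pi. cmod (Fpoly p n (cis t)) powr (- p / (p - 1)))" by (rule I2_ge_half)
  finally have "integral {0..pi/2} (\<lambda>t. c * (1 / (t + aa))) \<le> (LBINT t=0..pi. cmod (Fpoly p n (cis t)) powr (- p / (p - 1)))" .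
  moreover have "integral {0..pi/2} (\<lambda>t. c * (1 / (t + aa))) = c * (ln (pi/2 + aa) - ln aa)"
    using integral_cmul[of "{0..pi/2}" c "\<lambda>t. 1 / (t + aa)"] int_inv1[OF aa_pos] by simp
  ultimately show ?thesis unfolding c_def by simp
qed

lemma caseB_I1:
  shows "pi / 2 * exp (p * (ln (1/2) - 10 * KK - ln 4)) \<le> (LBINT t=0..pi. cmod (Fpoly p n (cis t)) powr p)"
proof -
  define c where "c = exp (p * (ln (1/2) - 10 * KK - ln 4))"
  have pt: "c \<le> cmod (Fpoly p n (cis t)) powr p" if t: "t \<in> {pi/2..pi}" for t
  proof -
    have "ss p * ln (pi - t + aa) \<le> ln 4"
      by (rule s_ln_le4[OF s01]) (use t aa_pos pi_half_aa in auto)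
    moreover have "ln (cmod (Fpoly p n (cis t))) \<ge> ln (1/2) - 10 * KK - ss p * ln (pi - t + aa)"
      by (rule F_lower[OF p n, unfolded aa_9]) (use t in auto)
    ultimately have "ln (1/2) - 10 * KK - ln 4 \<le> ln (cmod (Fpoly p n (cis t)))" by linarith
    hence "p * (ln (1/2) - 10 * KK - ln 4) \<le> p * ln (cmod (Fpoly p n (cis t)))"
      using p by (intro mult_left_mono) auto
    hence "exp (p * (ln (1/2) - 10 * KK - ln 4)) \<le> exp (p * ln (cmod (Fpoly p n (cis t))))" by (rule exp_mono)
    thus ?thesis by (simp only: Fpowr c_def)
  qed
  have "integral {pi/2..pi} (\<lambda>t. c) \<le> integral {pi/2..pi} (\<lambda>t. cmod (Fpoly p n (cis t)) powr p)"
    by (rule integral_le[OF integrable_const_ivl F_integrable pt])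
  also have "\<dots> \<le> (LBINT t=0..pi. cmod (Fpoly p n (cis t)) powr p)" by (rule I1_ge_half)
  finally show ?thesis unfolding c_def by simp
qed

end


lemma J_lower:
  assumes p: "(p::real) > 1" and n: "n \<ge> 3"
  shows "ln (pi * NN n / 18) \<le> ln (pi/2 + aa n) - ln (aa n)" "0 \<le> ln (pi * NN n / 18)"
proof -
  have n2: "n \<ge> 2" using n by simp
  have a: "aa n = 9 / NN n" by (rule aa_def[OF p n2])
  have N: "NN n > 0" by (rule NN_pos)
  have ap: "aa n > 0" using a N by simp
  have q: "0 < pi/2 + aa n" using ap pi_gt_zero by linarith
  have "ln (pi / 2) \<le> ln (pi/2 + aa n)" using ap q by (subst ln_le_cancel_iff) auto
  moreover have "ln (pi / 2) - ln (aa n) = ln (pi * NN n / 18)"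
  proof -
    have e1: "(pi/2) / aa n = pi * NN n / 18" using N by (simp add: a field_simps)
    have e2: "ln ((pi/2) / aa n) = ln (pi / 2) - ln (aa n)" using ap by (intro ln_divide_pos) auto
    show ?thesis by (simp only: e2[symmetric] e1)
  qed
  ultimately show "ln (pi * NN n / 18) \<le> ln (pi/2 + aa n) - ln (aa n)" by linarith
  have "NN n \<ge> 7" using n by (simp add: NN_def)
  hence "pi * NN n \<ge> 3 * 7" using pi_gt3 by (intro mult_mono) auto
  thus "0 \<le> ln (pi * NN n / 18)" by simp
qed

theorem mainTheorem3:
  fixes p :: real
  assumes "1 < p"
  shows "filterlim (\<lambda>n. Ap_quot p n) at_top sequentially"
proof -
  have p: "p > 1" by (rule assms)
  have ev3: "eventually (\<lambda>n. n \<ge> (3::nat)) sequentially" by (rule eventually_ge_at_top)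
  show ?thesis
  proof (cases "p \<ge> 2")
    case True
    define c1 where "c1 = exp (p * (ln (1/2) - 10 * KK))"
    define c2 where "c2 = exp (- (p / (p - 1)) * (ln 2 + 10 * KK + ln 4))"
    define C where "C = (c1 / pi) powr (1 / p) * ((1 / pi) * (pi / 2 * c2)) powr ((p - 1) / p)"
    have C: "C > 0" unfolding C_def c1_def c2_def by simp
    have lim: "filterlim (\<lambda>n::nat. C * ln (pi * NN n / 18) powr (1 / p)) at_top sequentially"
      by (rule lim_aux) (use C p in auto)
    show ?thesis
    proof (rule filterlim_at_top_mono[OF lim])
      show "eventually (\<lambda>n. C * ln (pi * NN n / 18) powr (1 / p) \<le> Ap_quot p n) sequentially"
        using ev3
      proof eventually_elim
        case (elim n)
        have n2: "n \<ge> 2" using elim by simp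
        define L where "L = ln (pi * NN n / 18)"
        define J where "J = ln (pi/2 + aa n) - ln (aa n)"
        have LJ: "L \<le> J" "0 \<le> L" using J_lower[OF p elim] unfolding L_def J_def by auto
        have c1: "c1 > 0" "c2 > 0" unfolding c1_def c2_def by auto
        have A: "(1/pi * (c1 * J)) powr (1/p) * (1/pi * (pi / 2 * c2)) powr ((p - 1)/p) \<le> Ap_quot p n"
        proof (rule Ap_lower[OF p])
          show "0 \<le> c1 * J" using c1 LJ by simp
          show "c1 * J \<le> (LBINT t=0..pi. cmod (Fpoly p n (cis t)) powr p)"
            unfolding c1_def J_def by (rule caseA_I1[OF p n2 True])
          show "0 \<le> pi / 2 * c2" using c1 by simp
          show "pi / 2 * c2 \<le> (LBINT t=0..pi. cmod (Fpoly p n (cis t)) powr (- p / (p - 1)))"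
            unfolding c2_def by (rule caseA_I2[OF p n2 True])
        qed
        have "c1 * L \<le> c1 * J" using LJ c1 by (intro mult_left_mono) auto
        hence le: "c1 / pi * L \<le> 1/pi * (c1 * J)" by (simp add: divide_right_mono)
        have "(c1 / pi * L) powr (1/p) \<le> (1/pi * (c1 * J)) powr (1/p)"
          using LJ c1 p le by (intro powr_mono2) auto
        moreover have "(c1 / pi * L) powr (1/p) = (c1 / pi) powr (1/p) * L powr (1/p)"
          by (rule powr_mult)
        ultimately have m: "(c1 / pi) powr (1/p) * L powr (1/p) \<le> (1/pi * (c1 * J)) powr (1/p)" by simp
        define Q where "Q = (1/pi * (pi / 2 * c2)) powr ((p - 1)/p)"
        have f1: "(c1 / pi) powr (1/p) * L powr (1/p) * Q \<le> (1/pi * (c1 * J)) powr (1/p) * Q"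
          using m by (rule mult_right_mono) (simp add: Q_def)
        have f2: "C * L powr (1/p) = (c1 / pi) powr (1/p) * L powr (1/p) * Q"
          unfolding C_def Q_def by (simp only: mult_ac)
        have "C * L powr (1/p) \<le> (1/pi * (c1 * J)) powr (1/p) * (1/pi * (pi / 2 * c2)) powr ((p - 1)/p)"
          using f1 f2 unfolding Q_def by linarith
        thus ?case using A unfolding L_def by linarith
      qed
    qed
  next
    case False
    hence p2: "p < 2" by simp
    define c3 where "c3 = exp (- (p / (p - 1)) * (ln 2 + 10 * KK))"
    define c4 where "c4 = exp (p * (ln (1/2) - 10 * KK - ln 4))"
    define C where "C = ((1 / pi) * (pi / 2 * c4)) powr (1 / p) * (c3 / pi) powr ((p - 1) / p)"
    have C: "C > 0" unfolding C_def c3_def c4_def by simp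
    have lim: "filterlim (\<lambda>n::nat. C * ln (pi * NN n / 18) powr ((p - 1) / p)) at_top sequentially"
      by (rule lim_aux) (use C p in auto)
    show ?thesis
    proof (rule filterlim_at_top_mono[OF lim])
      show "eventually (\<lambda>n. C * ln (pi * NN n / 18) powr ((p - 1) / p) \<le> Ap_quot p n) sequentially"
        using ev3
      proof eventually_elim
        case (elim n)
        have n2: "n \<ge> 2" using elim by simp
        define L where "L = ln (pi * NN n / 18)"
        define J where "J = ln (pi/2 + aa n) - ln (aa n)"
        have LJ: "L \<le> J" "0 \<le> L" using J_lower[OF p elim] unfolding L_def J_def by auto
        have c1: "c3 > 0" "c4 > 0" unfolding c3_def c4_def by auto
        have A: "(1/pi * (pi / 2 * c4)) powr (1/p) * (1/pi * (c3 * J)) powr ((p - 1)/p) \<le> Ap_quot p n"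
        proof (rule Ap_lower[OF p])
          show "0 \<le> c3 * J" using c1 LJ by simp
          show "c3 * J \<le> (LBINT t=0..pi. cmod (Fpoly p n (cis t)) powr (- p / (p - 1)))"
            unfolding c3_def J_def by (rule caseB_I2[OF p n2 p2])
          show "0 \<le> pi / 2 * c4" using c1 by simp
          show "pi / 2 * c4 \<le> (LBINT t=0..pi. cmod (Fpoly p n (cis t)) powr p)"
            unfolding c4_def by (rule caseB_I1[OF p n2])
        qed
        have "c3 * L \<le> c3 * J" using LJ c1 by (intro mult_left_mono) auto
        hence le: "c3 / pi * L \<le> 1/pi * (c3 * J)" by (simp add: divide_right_mono)
        have "(c3 / pi * L) powr ((p - 1)/p) \<le> (1/pi * (c3 * J)) powr ((p - 1)/p)"
          using LJ c1 p le by (intro powr_mono2) auto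
        moreover have "(c3 / pi * L) powr ((p - 1)/p) = (c3 / pi) powr ((p - 1)/p) * L powr ((p - 1)/p)"
          by (rule powr_mult)
        ultimately have m: "(c3 / pi) powr ((p - 1)/p) * L powr ((p - 1)/p) \<le> (1/pi * (c3 * J)) powr ((p - 1)/p)" by simp
        define Q where "Q = (1/pi * (pi / 2 * c4)) powr (1/p)"
        have f1: "Q * ((c3 / pi) powr ((p - 1)/p) * L powr ((p - 1)/p)) \<le> Q * (1/pi * (c3 * J)) powr ((p - 1)/p)"
          using m by (rule mult_left_mono) (simp add: Q_def)
        have f2: "C * L powr ((p - 1)/p) = Q * ((c3 / pi) powr ((p - 1)/p) * L powr ((p - 1)/p))"
          unfolding C_def Q_def by (simp only: mult_ac)
        have "C * L powr ((p - 1)/p) \<le> (1/pi * (pi / 2 * c4)) powr (1/p) * (1/pi * (c3 * J)) powr ((p - 1)/p)"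
          using f1 f2 unfolding Q_def by linarith
        thus ?case using A unfolding L_def by linarith
      qed
    qed
  qed
qed


end
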